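(* Let $G$ be a graph on $d+2$ vertices and $k>1$, and suppose there exist a nonzero vector $w \in \mathbf{1}^{\perp}$ and a real number $\gamma$ with $B_G(k) w = \gamma \mathbf{1}$. Then $\det(xJ + B_G(k))$ is the zero polynomial in $x$ if and only if $\det(B_G(k)) = 0$.
   Context: Graphs are finite and simple with vertices labeled $1,\dots,d+2$. $B_G(k)$ is the $(d+2)\times(d+2)$ matrix with $b_{ii}=0$, $b_{ij}=-1$ for non-adjacent $i\neq j$, $b_{ij}=-k^2$ for adjacent $i,j$. $J$ is the all-ones matrix, $\mathbf{1}$ the all-ones vector and $\mathbf{1}^{\perp}$ its orthogonal complement. *)

theory Defs
  imports "HOL-Analysis.Analysis" "HOL-Computational_Algebra.Polynomial"
begin

definition simple_graph :: "('n \<Rightarrow> 'n \<Rightarrow> bool) \<Rightarrow> bool" where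
  "simple_graph E \<longleftrightarrow> (\<forall>i j. E i j \<longleftrightarrow> E j i) \<and> (\<forall>i. \<not> E i i)"

definition BG :: "('n::finite \<Rightarrow> 'n \<Rightarrow> bool) \<Rightarrow> real \<Rightarrow> real^'n^'n" where
  "BG E k = (\<chi> i j. if i = j then 0 else if E i j then - (k^2) else -1)"

definition ones :: "real^'n" where "ones = (\<chi> i. 1)"
definition Jmat :: "real^'n^'n" where "Jmat = (\<chi> i j. 1)"

text \<open>The polynomial det(x J + M) in the variable x, as an element of real poly.\<close>
definition detxJ :: "real^'n::finite^'n \<Rightarrow> real poly" where
  "detxJ M = det (\<chi> i j. [: M $ i $ j, Jmat $ i $ j :])"

end

theory Submission
  imports Defs
begin

lemma det_zero_iff_ker:
  fixes A :: "real^'n::finite^'n"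
  shows "det A = 0 \<longleftrightarrow> (\<exists>x. x \<noteq> 0 \<and> A *v x = 0)"
proof -
  have "invertible A \<longleftrightarrow> (\<exists>B. B ** A = mat 1)"
    unfolding invertible_def using matrix_left_right_inverse by metis
  then show ?thesis
    using invertible_det_nz[of A] matrix_left_invertible_ker[of A] by auto
qed

lemma poly_detxJ:
  fixes M :: "real^'n::finite^'n"
  shows "poly (detxJ M) x = det (M + x *\<^sub>R Jmat)"
  unfolding detxJ_def det_def
  by (simp add: poly_sum poly_prod Jmat_def)

lemma BG_sym:
  fixes E :: "'n::finite \<Rightarrow> 'n \<Rightarrow> bool"
  assumes "simple_graph E"
  shows "u \<bullet> (BG E k *v w) = (BG E k *v u) \<bullet> w"
proof -
  have s: "BG E k $ i $ j = BG E k $ j $ i" for i j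
    using assms unfolding simple_graph_def BG_def by auto
  have "u \<bullet> (BG E k *v w) = (\<Sum>i\<in>UNIV. \<Sum>j\<in>UNIV. u $ i * BG E k $ i $ j * w $ j)"
    by (simp add: inner_vec_def matrix_vector_mult_def sum_distrib_left mult.assoc)
  also have "\<dots> = (\<Sum>j\<in>UNIV. \<Sum>i\<in>UNIV. u $ i * BG E k $ i $ j * w $ j)"
    by (rule sum.swap)
  also have "\<dots> = (BG E k *v u) \<bullet> w"
    by (simp add: inner_vec_def matrix_vector_mult_def sum_distrib_left s mult_ac)
  finally show ?thesis .
qed

lemma J_mult: "(Jmat :: real^'n::finite^'n) *v v = (v \<bullet> ones) *\<^sub>R ones"
  by (simp add: Jmat_def ones_def matrix_vector_mult_def inner_vec_def vec_eq_iff)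

theorem lemma3p5:
  fixes E :: "'n::finite \<Rightarrow> 'n \<Rightarrow> bool" and d :: nat and k :: real
  assumes "CARD('n) = d + 2"
    and "simple_graph E"
    and "k > 1"
    and "\<exists>w :: real^'n. \<exists>\<gamma> :: real. w \<noteq> 0 \<and> w \<bullet> ones = 0 \<and> BG E k *v w = \<gamma> *\<^sub>R ones"
  shows "detxJ (BG E k) = 0 \<longleftrightarrow> det (BG E k) = 0"
proof
  assume "detxJ (BG E k) = 0"
  then have "poly (detxJ (BG E k)) 0 = 0" by simp
  then show "det (BG E k) = 0" by (simp add: poly_detxJ)
next
  assume d0: "det (BG E k) = 0"
  obtain w \<gamma> where w: "w \<noteq> 0" "w \<bullet> ones = 0" "BG E k *v w = \<gamma> *\<^sub>R ones"
    using assms(4) by blast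
  obtain v :: "real^'n" where v: "v \<noteq> 0" "v \<bullet> ones = 0" "BG E k *v v = 0"
  proof (cases "\<gamma> = 0")
    case True
    then show ?thesis using that w by simp
  next
    case False
    obtain u where u: "u \<noteq> 0" "BG E k *v u = 0" using d0 det_zero_iff_ker by blast
    have "u \<bullet> (BG E k *v w) = 0" using BG_sym[OF assms(2)] u by simp
    then have "\<gamma> * (u \<bullet> ones) = 0" using w(3) by (simp add: inner_commute)
    then have "u \<bullet> ones = 0" using False by simp
    then show ?thesis using that u by blast
  qed
  have "\<forall>x. poly (detxJ (BG E k)) x = 0"
  proof
    fix x
    have sc: "(x *\<^sub>R Jmat) *v v = x *\<^sub>R (Jmat *v v)"
      by (simp add: matrix_vector_mult_def vec_eq_iff sum_distrib_left mult_ac)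
    have "(BG E k + x *\<^sub>R Jmat) *v v = 0"
      using v sc by (simp add: matrix_vector_mult_add_rdistrib J_mult)
    then show "poly (detxJ (BG E k)) x = 0"
      unfolding poly_detxJ using det_zero_iff_ker v(1) by blast
  qed
  then show "detxJ (BG E k) = 0" using poly_all_0_iff_0 by blast
qed

end
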